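(* Let $P(t)=\binom{r+t}{r}-\binom{r+t-d}{r}$. For every $x\in\mathrm{Hilb}^P(\mathbb{P}^r_k)$ that is unstable (at level $d$) there exists $g_x\in G=\mathrm{GL}_{r+1}(k)$ such that $$|\Delta_{g_x.x,d}|=\max_{h\in G}|\Delta_{h.x,d}|\quad\text{and}\quad n_{H_x}=n_{H_{g_x.x}}=n_{e,H_{g_x.x}},$$ where $e=[1:0:\cdots:0]$.
   Context: $k$ is an algebraically closed field, $S=k[x_0,\dots,x_r]$, $S_d$ its degree-$d$ part; points $x$ of $\mathrm{Hilb}^P(\mathbb{P}^r_k)$ are hypersurfaces $H_x=V(f)$ with $0\ne f\in S_d$. $G$ acts on $S_1=\mathrm{span}(x_0,\dots,x_r)$ by the standard representation, hence on $S$; $g.x$ corresponds to $V(g.f)$. $T$ is the diagonal torus of $\mathrm{SL}_{r+1}(k)$; $\lambda=(a_0,\dots,a_r)$ with $\sum a_i=0$ denotes $s\mapsto\mathrm{diag}(s^{a_i})$, with Euclidean norm $\Vert\lambda\Vert$. The state $\Xi_{x,d}$ is the set of exponent vectors in $\mathbb{R}^{r+1}$ of the monomials with nonzero coefficient in $f$, and $|\Delta_{x,d}|=\max_{0\ne\lambda\in\Gamma(T)}\min_{m\in\Xi_{x,d}}\langle\lambda,m\rangle/\Vert\lambda\Vert$ (the distance from $\frac{d}{r+1}(1,\dots,1)$ to the convex hull of $\Xi_{x,d}$). $x$ is unstable iff $\max_{h\in G}|\Delta_{h.x,d}|>0$ (equivalently, some one-parameter subgroup $\lambda$ of $\mathrm{SL}_{r+1}(k)$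 has positive Hilbert–Mumford weight $\mu([f],\lambda)$, the minimal $\lambda$-weight of a nonzero component of $f$). Multiplicity: for $X=V(f)$, writing $f=\sum_j x_0^{d-j}f_j(x_1,\dots,x_r)$ with $f_j$ homogeneous of degree $j$, $n_{e,X}=\min\{j:f_j\ne0\}$; for a point $p$, $n_{p,X}$ is defined likewise after a linear coordinate change sending $p$ to $e$ (coordinate independent; the degree of the tangent cone), and $n_X=\max_{p\in\mathbb{P}^r_k}n_{p,X}$. *)

theory Defs
  imports "HOL-Analysis.Analysis" "HOL-Library.Poly_Mapping"
begin

text \<open>Polynomials in the variables x_0, x_1, ... over a field: finitely supported maps
  from exponent vectors exponent vectors to coefficients.\<close>
type_synonym 'k mpoly = "(nat \<Rightarrow>\<^sub>0 nat) \<Rightarrow>\<^sub>0 'k"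

definition alg_closed_field :: "'k::field itself \<Rightarrow> bool" where
  "alg_closed_field _ \<longleftrightarrow>
     (\<forall>n>0. \<forall>c :: nat \<Rightarrow> 'k. \<exists>z. z ^ n + (\<Sum>i<n. c i * z ^ i) = 0)"

definition Var :: "nat \<Rightarrow> 'k::comm_ring_1 mpoly" where
  "Var i = Poly_Mapping.single (Poly_Mapping.single i 1) 1"

definition Const :: "'k::comm_ring_1 \<Rightarrow> 'k mpoly" where
  "Const c = Poly_Mapping.single 0 c"

definition mdeg :: "(nat \<Rightarrow>\<^sub>0 nat) \<Rightarrow> nat" where
  "mdeg m = (\<Sum>i\<in>Poly_Mapping.keys m. Poly_Mapping.lookup m i)"

definition is_form :: "nat \<Rightarrow> nat \<Rightarrow> 'k::field mpoly \<Rightarrow> bool" where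
  "is_form r d f \<longleftrightarrow> f \<noteq> 0 \<and>
     (\<forall>m\<in>Poly_Mapping.keys f. Poly_Mapping.keys m \<subseteq> {..r} \<and> mdeg m = d)"

text \<open>GL_{r+1}(k), matrices indexed by {0..r} (entries outside are irrelevant).\<close>
definition GL :: "nat \<Rightarrow> (nat \<Rightarrow> nat \<Rightarrow> 'k::field) set" where
  "GL r = {g. \<exists>h. \<forall>i\<le>r. \<forall>l\<le>r.
      (\<Sum>j\<le>r. g i j * h j l) = (if i = l then 1 else 0)}"

text \<open>Linear substitution x_j \<mapsto> \<Sum>_i A j i x_i, i.e. (subst A f)(y) = f(A y).\<close>
definition subst :: "nat \<Rightarrow> (nat \<Rightarrow> nat \<Rightarrow> 'k::field) \<Rightarrow> 'k mpoly \<Rightarrow> 'k mpoly" where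
  "subst r A f = (\<Sum>m\<in>Poly_Mapping.keys f. Const (Poly_Mapping.lookup f m) *
      (\<Prod>j\<in>Poly_Mapping.keys m. (\<Sum>i\<le>r. Const (A j i) * Var i) ^ Poly_Mapping.lookup m j))"

text \<open>Action of g on S induced by the standard representation on S_1:
  g.x_j = \<Sum>_i g_{ij} x_i.\<close>
definition act :: "nat \<Rightarrow> (nat \<Rightarrow> nat \<Rightarrow> 'k::field) \<Rightarrow> 'k mpoly \<Rightarrow> 'k mpoly" where
  "act r g f = subst r (\<lambda>j i. g i j) f"

text \<open>Gamma(T) minus 0: one-parameter subgroups of the diagonal torus of SL_{r+1}.\<close>
definition OPS :: "nat \<Rightarrow> (nat \<Rightarrow> int) set" where
  "OPS r = {lam. (\<forall>i>r. lam i = 0) \<and> (\<Sum>i\<le>r. lam i) = 0 \<and> (\<exists>i\<le>r. lam i \<noteq> 0)}"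

definition ops_norm :: "nat \<Rightarrow> (nat \<Rightarrow> int) \<Rightarrow> real" where
  "ops_norm r lam = sqrt (\<Sum>i\<le>r. (real_of_int (lam i))\<^sup>2)"

definition pairing :: "nat \<Rightarrow> (nat \<Rightarrow> int) \<Rightarrow> (nat \<Rightarrow>\<^sub>0 nat) \<Rightarrow> real" where
  "pairing r lam m = (\<Sum>i\<le>r. real_of_int (lam i) * real (Poly_Mapping.lookup m i))"

text \<open>The state Xi_{x,d} is the support of f.\<close>
definition Delta :: "nat \<Rightarrow> 'k::field mpoly \<Rightarrow> real" where
  "Delta r f = (SUP lam\<in>OPS r. Min ((\<lambda>m. pairing r lam m) ` Poly_Mapping.keys f) / ops_norm r lam)"

definition unstable :: "nat \<Rightarrow> 'k::field mpoly \<Rightarrow> bool" where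
  "unstable r f \<longleftrightarrow> (SUP h\<in>GL r. Delta r (act r h f)) > 0"

text \<open>n_{e,X}: writing f = \<Sum>_j x_0^{d-j} f_j, the least j with f_j \<noteq> 0.\<close>
definition mult_e :: "nat \<Rightarrow> 'k::field mpoly \<Rightarrow> nat" where
  "mult_e d f = Min ((\<lambda>m. d - Poly_Mapping.lookup m 0) ` Poly_Mapping.keys f)"

text \<open>Nonzero vectors representing points of P^r.\<close>
definition proj_pts :: "nat \<Rightarrow> (nat \<Rightarrow> 'k::field) set" where
  "proj_pts r = {p. (\<forall>i>r. p i = 0) \<and> (\<exists>i\<le>r. p i \<noteq> 0)}"

text \<open>n_{p,X}: multiplicity at e after a linear coordinate change A sending e to p.\<close>
definition mult_at :: "nat \<Rightarrow> nat \<Rightarrow> 'k::field mpoly \<Rightarrow> (nat \<Rightarrow> 'k) \<Rightarrow> nat" where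
  "mult_at r d f p = mult_e d (subst r
      (SOME A. A \<in> GL r \<and> (\<forall>i\<le>r. A i 0 = p i)) f)"

definition mult_max :: "nat \<Rightarrow> nat \<Rightarrow> 'k::field mpoly \<Rightarrow> nat" where
  "mult_max r d f = Max ((\<lambda>p. mult_at r d f p) ` proj_pts r)"

end

theory Submission
  imports Defs "Jordan_Normal_Form.Determinant"
begin


definition mm :: "nat \<Rightarrow> (nat \<Rightarrow> nat \<Rightarrow> 'k::field) \<Rightarrow> (nat \<Rightarrow> nat \<Rightarrow> 'k) \<Rightarrow> nat \<Rightarrow> nat \<Rightarrow> 'k" where
  "mm r A B = (\<lambda>i l. \<Sum>j\<le>r. A i j * B j l)"

definition isI :: "nat \<Rightarrow> (nat \<Rightarrow> nat \<Rightarrow> 'k::field) \<Rightarrow> bool" where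
  "isI r X \<longleftrightarrow> (\<forall>i\<le>r. \<forall>l\<le>r. X i l = (if i = l then 1 else 0))"

definition trp :: "(nat \<Rightarrow> nat \<Rightarrow> 'k) \<Rightarrow> nat \<Rightarrow> nat \<Rightarrow> 'k" where
  "trp X = (\<lambda>i j. X j i)"

lemma GL_iff: "g \<in> GL r \<longleftrightarrow> (\<exists>h. isI r (mm r g h))"
  by (simp add: GL_def isI_def mm_def)

lemma left_inv:
  fixes A B :: "nat \<Rightarrow> nat \<Rightarrow> 'k::field"
  assumes "isI r (mm r A B)" shows "isI r (mm r B A)"
proof -
  define n where "n = Suc r"
  define MA where "MA = mat n n (\<lambda>(i,j). A i j)"
  define MB where "MB = mat n n (\<lambda>(i,j). B i j)"
  have cA: "MA \<in> carrier_mat n n" and cB: "MB \<in> carrier_mat n n" by (auto simp: MA_def MB_def)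
  have lt: "{..<n} = {..r}" by (auto simp: n_def)
  have "MA * MB = 1\<^sub>m n"
  proof (rule eq_matI)
    fix i j assume ij: "i < dim_row (1\<^sub>m n)" "j < dim_col (1\<^sub>m n)"
    hence "i \<le> r" "j \<le> r" by (auto simp: n_def)
    have "(MA * MB) $$ (i, j) = (\<Sum>x<n. A i x * B x j)"
      using ij by (simp add: MA_def MB_def scalar_prod_def atLeast0LessThan)
    also have "\<dots> = mm r A B i j" by (simp add: mm_def lt)
    also have "\<dots> = 1\<^sub>m n $$ (i, j)" using assms \<open>i \<le> r\<close> \<open>j \<le> r\<close> ij by (simp add: isI_def)
    finally show "(MA * MB) $$ (i, j) = 1\<^sub>m n $$ (i, j)" .
  qed (auto simp: MA_def MB_def)
  hence BA: "MB * MA = 1\<^sub>m n" using mat_mult_left_right_inverse[OF cA cB] by blast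
  show ?thesis unfolding isI_def
  proof (intro allI impI)
    fix i l assume "i \<le> r" "l \<le> r"
    hence il: "i < n" "l < n" by (auto simp: n_def)
    have "mm r B A i l = (\<Sum>x<n. B i x * A x l)" by (simp add: mm_def lt)
    also have "\<dots> = (MB * MA) $$ (i, l)"
      using il by (simp add: MA_def MB_def scalar_prod_def atLeast0LessThan)
    also have "\<dots> = (if i = l then 1 else 0)" using il by (simp add: BA)
    finally show "mm r B A i l = (if i = l then 1 else 0)" .
  qed
qed

lemma mm_assoc: "mm r (mm r A B) C = mm r A (mm r B C)"
  by (auto simp: mm_def fun_eq_iff sum_distrib_left sum_distrib_right mult.assoc intro: sum.swap)

lemma mm_isI_right: assumes "isI r B" "l \<le> r" shows "mm r A B i l = A i l"
proof -
  have "(\<Sum>j\<le>r. A i j * B j l) = (\<Sum>j\<le>r. if j = l then A i j else 0)"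
    by (rule sum.cong) (use assms in \<open>auto simp: isI_def\<close>)
  thus ?thesis using assms by (simp add: mm_def)
qed

lemma mm_isI_left: assumes "isI r A" "i \<le> r" shows "mm r A B i l = B i l"
proof -
  have "(\<Sum>j\<le>r. A i j * B j l) = (\<Sum>j\<le>r. if j = i then B j l else 0)"
    by (rule sum.cong) (use assms in \<open>auto simp: isI_def\<close>)
  thus ?thesis using assms by (simp add: mm_def)
qed

lemma mm_cong: "(\<And>j. j \<le> r \<Longrightarrow> X j l = Y j l) \<Longrightarrow> mm r A X i l = mm r A Y i l"
  by (simp add: mm_def)

lemma mm_cong_left: "(\<And>j. j \<le> r \<Longrightarrow> X i j = Y i j) \<Longrightarrow> mm r X A i l = mm r Y A i l"
  by (simp add: mm_def)

lemma GL_mm: assumes "g \<in> GL r" "h \<in> GL r" shows "mm r g h \<in> GL r"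
proof -
  obtain g' where g': "isI r (mm r g g')" using assms GL_iff by blast
  obtain h' where h': "isI r (mm r h h')" using assms GL_iff by blast
  have "isI r (mm r (mm r g h) (mm r h' g'))"
    unfolding isI_def
  proof (intro allI impI)
    fix i l assume il: "i \<le> r" "l \<le> r"
    have "mm r (mm r g h) (mm r h' g') i l = mm r g (mm r (mm r h h') g') i l"
      by (simp add: mm_assoc)
    also have "\<dots> = mm r g g' i l"
      by (rule mm_cong) (simp add: mm_isI_left[OF h'])
    finally show "mm r (mm r g h) (mm r h' g') i l = (if i = l then 1 else 0)"
      using g' il by (simp add: isI_def)
  qed
  thus ?thesis using GL_iff by blast
qed

lemma mm_trp: "mm r (trp A) (trp B) = trp (mm r B A)"
  by (simp add: mm_def trp_def fun_eq_iff mult.commute)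

lemma isI_trp: "isI r (trp X) = isI r X"
  by (auto simp: isI_def trp_def)

lemma GL_trp: assumes "g \<in> GL r" shows "trp g \<in> GL r"
proof -
  obtain h where "isI r (mm r g h)" using assms GL_iff by blast
  hence "isI r (mm r h g)" by (rule left_inv)
  hence "isI r (mm r (trp g) (trp h))" by (simp add: mm_trp isI_trp)
  thus ?thesis using GL_iff by blast
qed

lemma GL_left_inv: assumes "g \<in> GL r" obtains h where "isI r (mm r h g)" "isI r (mm r g h)" "h \<in> GL r"
proof -
  obtain h where h: "isI r (mm r g h)" using assms GL_iff by blast
  hence "isI r (mm r h g)" by (rule left_inv)
  thus ?thesis using that h GL_iff by blast
qed



lemma lookup_Const_mult: "Poly_Mapping.lookup (Const c * p) m = c * Poly_Mapping.lookup p m"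
proof -
  have "Const c * p = Poly_Mapping.map ((*) c) p"
    by (simp add: Const_def mult_map_scale_conv_mult)
  thus ?thesis by (simp add: map.rep_eq when_def)
qed

lemma keys_Const_mult: "Poly_Mapping.keys (Const c * p) \<subseteq> Poly_Mapping.keys p"
  by (auto simp: in_keys_iff lookup_Const_mult)

lemma Const_mult_single: "Const c * Poly_Mapping.single m a = Poly_Mapping.single m (c * a)"
  by (simp add: Const_def mult_single)

lemma Const_mult_Const: "Const a * Const b = Const (a * b)"
  by (simp add: Const_def mult_single)

lemma Const_add: "Const (a + b) = Const a + Const b"
  by (simp add: Const_def single_add)

lemma Const_0 [simp]: "Const 0 = 0" by (simp add: Const_def)
lemma Const_1 [simp]: "Const 1 = 1" by (simp add: Const_def)

lemma Const_sum: "Const (\<Sum>i\<in>S. f i) = (\<Sum>i\<in>S. Const (f i))"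
  by (induction S rule: infinite_finite_induct) (auto simp: Const_add)

lemma poly_expand: "p = (\<Sum>m\<in>Poly_Mapping.keys p. Poly_Mapping.single m (Poly_Mapping.lookup p m))"
proof (rule poly_mapping_eqI)
  fix k
  show "Poly_Mapping.lookup p k = Poly_Mapping.lookup (\<Sum>m\<in>Poly_Mapping.keys p. Poly_Mapping.single m (Poly_Mapping.lookup p m)) k"
    by (simp add: lookup_sum lookup_single when_def in_keys_iff)
qed

definition lin :: "nat \<Rightarrow> (nat \<Rightarrow> nat \<Rightarrow> 'k::field) \<Rightarrow> nat \<Rightarrow> 'k mpoly" where
  "lin r A j = (\<Sum>i\<le>r. Const (A j i) * Var i)"

definition mon :: "nat \<Rightarrow> (nat \<Rightarrow> nat \<Rightarrow> 'k::field) \<Rightarrow> (nat \<Rightarrow>\<^sub>0 nat) \<Rightarrow> 'k mpoly" where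
  "mon r A m = (\<Prod>j\<in>Poly_Mapping.keys m. lin r A j ^ Poly_Mapping.lookup m j)"

lemma subst_mon: "subst r A f = (\<Sum>m\<in>Poly_Mapping.keys f. Const (Poly_Mapping.lookup f m) * mon r A m)"
  by (simp add: subst_def mon_def lin_def)

lemma mon_superset: assumes "finite S" "Poly_Mapping.keys m \<subseteq> S"
  shows "mon r A m = (\<Prod>j\<in>S. lin r A j ^ Poly_Mapping.lookup m j)"
  unfolding mon_def
  by (rule prod.mono_neutral_left) (use assms in \<open>auto simp: not_in_keys_iff_lookup_eq_zero\<close>)

lemma mon_add: "mon r A (m + m') = mon r A m * mon r A m'"
proof -
  let ?S = "Poly_Mapping.keys m \<union> Poly_Mapping.keys m'"
  have f: "finite ?S" by simp
  have k: "Poly_Mapping.keys (m + m') \<subseteq> ?S" by (rule keys_add)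
  have 1: "mon r A (m + m') = (\<Prod>j\<in>?S. lin r A j ^ Poly_Mapping.lookup (m + m') j)"
    by (rule mon_superset[OF f k])
  have 2: "mon r A m = (\<Prod>j\<in>?S. lin r A j ^ Poly_Mapping.lookup m j)"
    by (rule mon_superset[OF f]) simp
  have 3: "mon r A m' = (\<Prod>j\<in>?S. lin r A j ^ Poly_Mapping.lookup m' j)"
    by (rule mon_superset[OF f]) simp
  have "(\<Prod>j\<in>?S. lin r A j ^ Poly_Mapping.lookup (m + m') j)
      = (\<Prod>j\<in>?S. lin r A j ^ Poly_Mapping.lookup m j * lin r A j ^ Poly_Mapping.lookup m' j)"
    by (rule prod.cong) (simp_all only: lookup_add power_add)
  also have "\<dots> = (\<Prod>j\<in>?S. lin r A j ^ Poly_Mapping.lookup m j) * (\<Prod>j\<in>?S. lin r A j ^ Poly_Mapping.lookup m' j)"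
    by (rule prod.distrib)
  finally show ?thesis using 1 2 3 by simp
qed

lemma mon_zero [simp]: "mon r A 0 = 1" by (simp add: mon_def)

lemma subst_superset: assumes "finite S" "Poly_Mapping.keys f \<subseteq> S"
  shows "subst r A f = (\<Sum>m\<in>S. Const (Poly_Mapping.lookup f m) * mon r A m)"
  unfolding subst_mon
  by (rule sum.mono_neutral_left) (use assms in \<open>auto simp: not_in_keys_iff_lookup_eq_zero\<close>)

lemma subst_add: "subst r A (f + g) = subst r A f + subst r A g"
proof -
  let ?S = "Poly_Mapping.keys f \<union> Poly_Mapping.keys g"
  have fS: "finite ?S" by simp
  have k: "Poly_Mapping.keys (f + g) \<subseteq> ?S" by (rule keys_add)
  have 1: "subst r A (f + g) = (\<Sum>m\<in>?S. Const (Poly_Mapping.lookup (f + g) m) * mon r A m)"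
    by (rule subst_superset[OF fS k])
  have 2: "subst r A f = (\<Sum>m\<in>?S. Const (Poly_Mapping.lookup f m) * mon r A m)"
    by (rule subst_superset[OF fS]) simp
  have 3: "subst r A g = (\<Sum>m\<in>?S. Const (Poly_Mapping.lookup g m) * mon r A m)"
    by (rule subst_superset[OF fS]) simp
  have "(\<Sum>m\<in>?S. Const (Poly_Mapping.lookup (f + g) m) * mon r A m)
     = (\<Sum>m\<in>?S. Const (Poly_Mapping.lookup f m) * mon r A m + Const (Poly_Mapping.lookup g m) * mon r A m)"
    by (rule sum.cong) (simp_all only: lookup_add Const_add distrib_right)
  also have "\<dots> = (\<Sum>m\<in>?S. Const (Poly_Mapping.lookup f m) * mon r A m) + (\<Sum>m\<in>?S. Const (Poly_Mapping.lookup g m) * mon r A m)"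
    by (rule sum.distrib)
  finally show ?thesis using 1 2 3 by simp
qed

lemma subst_zero [simp]: "subst r A 0 = 0" by (simp add: subst_def)

lemma subst_sum: "subst r A (\<Sum>i\<in>S. f i) = (\<Sum>i\<in>S. subst r A (f i))"
  by (induction S rule: infinite_finite_induct) (auto simp: subst_add)

lemma subst_single: "subst r A (Poly_Mapping.single m c) = Const c * mon r A m"
proof -
  have "subst r A (Poly_Mapping.single m c) = (\<Sum>m'\<in>{m}. Const (Poly_Mapping.lookup (Poly_Mapping.single m c) m') * mon r A m')"
    by (rule subst_superset) auto
  thus ?thesis by simp
qed

lemma subst_mult: "subst r A (f * g) = subst r A f * subst r A g"
proof -
  let ?F = "Poly_Mapping.keys f" and ?G = "Poly_Mapping.keys g"
  have "f * g = (\<Sum>m\<in>?F. Poly_Mapping.single m (Poly_Mapping.lookup f m)) * (\<Sum>m'\<in>?G. Poly_Mapping.single m' (Poly_Mapping.lookup g m'))"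
    using poly_expand[of f] poly_expand[of g] by simp
  also have "\<dots> = (\<Sum>m\<in>?F. \<Sum>m'\<in>?G. Poly_Mapping.single (m + m') (Poly_Mapping.lookup f m * Poly_Mapping.lookup g m'))"
    by (simp add: sum_product mult_single)
  finally have fg: "f * g = \<dots>" .
  have "subst r A (f * g) = (\<Sum>m\<in>?F. \<Sum>m'\<in>?G. Const (Poly_Mapping.lookup f m) * mon r A m * (Const (Poly_Mapping.lookup g m') * mon r A m'))"
    unfolding fg subst_sum subst_single
    by (intro sum.cong refl) (simp add: mon_add Const_mult_Const[symmetric] algebra_simps)
  also have "\<dots> = subst r A f * subst r A g"
    by (simp add: subst_mon sum_product)
  finally show ?thesis .
qed

lemma subst_one [simp]: "subst r A 1 = 1"
proof -
  have "(1 :: 'a mpoly) = Poly_Mapping.single 0 1" by simp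
  hence "subst r A (1 :: 'a mpoly) = Const 1 * mon r A 0" by (metis subst_single)
  thus ?thesis by simp
qed

lemma subst_power: "subst r A (f ^ n) = subst r A f ^ n"
  by (induction n) (auto simp: subst_mult)

lemma subst_prod: "subst r A (\<Prod>i\<in>S. f i) = (\<Prod>i\<in>S. subst r A (f i))"
  by (induction S rule: infinite_finite_induct) (auto simp: subst_mult)

lemma subst_Const: "subst r A (Const c) = Const c"
  unfolding Const_def by (simp add: subst_single Const_def)

lemma subst_Const_mult: "subst r A (Const c * f) = Const c * subst r A f"
  by (simp add: subst_mult subst_Const)

lemma mon_single1: "mon r A (Poly_Mapping.single j 1) = lin r A j"
proof -
  have "Poly_Mapping.keys (Poly_Mapping.single j (1::nat)) = {j}" by simp
  thus ?thesis unfolding mon_def by simp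
qed

lemma subst_Var: "subst r A (Var j) = lin r A j"
  unfolding Var_def subst_single mon_single1 by simp

lemma subst_lin: "subst r A (lin r B j) = lin r (mm r B A) j"
proof -
  have "subst r A (lin r B j) = (\<Sum>k\<le>r. Const (B j k) * (\<Sum>i\<le>r. Const (A k i) * Var i))"
    by (simp add: lin_def subst_sum subst_Const_mult subst_Var)
  also have "\<dots> = (\<Sum>k\<le>r. \<Sum>i\<le>r. Const (B j k * A k i) * Var i)"
    by (simp add: sum_distrib_left Const_mult_Const[symmetric] mult.assoc)
  also have "\<dots> = (\<Sum>i\<le>r. \<Sum>k\<le>r. Const (B j k * A k i) * Var i)"
    by (rule sum.swap)
  also have "\<dots> = lin r (mm r B A) j"
    by (simp add: lin_def mm_def Const_sum sum_distrib_right)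
  finally show ?thesis .
qed

lemma subst_mon_mon: "subst r A (mon r B m) = mon r (mm r B A) m"
  by (simp add: mon_def subst_prod subst_power subst_lin)

lemma subst_comp: "subst r A (subst r B f) = subst r (mm r B A) f"
proof -
  have "subst r A (subst r B f) = subst r A (\<Sum>m\<in>Poly_Mapping.keys f. Const (Poly_Mapping.lookup f m) * mon r B m)"
    by (simp only: subst_mon[of r B f])
  also have "\<dots> = (\<Sum>m\<in>Poly_Mapping.keys f. Const (Poly_Mapping.lookup f m) * mon r (mm r B A) m)"
    by (simp only: subst_sum subst_Const_mult subst_mon_mon)
  also have "\<dots> = subst r (mm r B A) f" by (simp only: subst_mon)
  finally show ?thesis .
qed

lemma act_comp: "act r g (act r h f) = act r (mm r g h) f"
proof -
  have e: "mm r (trp h) (trp g) = trp (mm r g h)" by (rule mm_trp)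
  have "act r g (act r h f) = subst r (mm r (trp h) (trp g)) f"
    unfolding act_def subst_comp trp_def ..
  also have "\<dots> = subst r (trp (mm r g h)) f" by (simp only: e)
  also have "\<dots> = act r (mm r g h) f" by (simp add: act_def trp_def)
  finally show ?thesis .
qed



definition Ub :: "((nat \<Rightarrow>\<^sub>0 nat) \<Rightarrow> real) \<Rightarrow> real \<Rightarrow> 'k::field mpoly \<Rightarrow> bool" where
  "Ub w c p \<longleftrightarrow> (\<forall>m\<in>Poly_Mapping.keys p. w m \<le> c)"

definition addw :: "((nat \<Rightarrow>\<^sub>0 nat) \<Rightarrow> real) \<Rightarrow> bool" where
  "addw w \<longleftrightarrow> (\<forall>a b. w (a + b) = w a + w b)"

lemma addw_0: assumes "addw w" shows "w 0 = 0"
proof -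
  have "w (0 + 0) = w 0 + w 0" using assms unfolding addw_def by blast
  hence "w 0 = w 0 + w 0" by simp
  thus ?thesis by simp
qed

lemma Ub_mono: "Ub w c p \<Longrightarrow> c \<le> c' \<Longrightarrow> Ub w c' p" by (auto simp: Ub_def)

lemma Ub_zero: "Ub w c 0" by (simp add: Ub_def)

lemma Ub_add: assumes "Ub w c p" "Ub w c q" shows "Ub w c (p + q)"
proof -
  have "Poly_Mapping.keys (p + q) \<subseteq> Poly_Mapping.keys p \<union> Poly_Mapping.keys q" by (rule keys_add)
  thus ?thesis using assms unfolding Ub_def by blast
qed

lemma Ub_sum: assumes "\<And>i. i \<in> S \<Longrightarrow> Ub w c (f i)" shows "Ub w c (\<Sum>i\<in>S. f i)"
proof -
  have "Poly_Mapping.keys (\<Sum>i\<in>S. f i) \<subseteq> (\<Union>i\<in>S. Poly_Mapping.keys (f i))" by (rule keys_sum)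
  thus ?thesis using assms unfolding Ub_def by blast
qed

lemma Ub_mult: assumes w: "addw w" and "Ub w a p" "Ub w b q" shows "Ub w (a + b) (p * q)"
  unfolding Ub_def
proof
  fix m assume "m \<in> Poly_Mapping.keys (p * q)"
  hence "m \<in> {x + y |x y. x \<in> Poly_Mapping.keys p \<and> y \<in> Poly_Mapping.keys q}"
    using keys_mult[of p q] by blast
  then obtain x y where "m = x + y" "x \<in> Poly_Mapping.keys p" "y \<in> Poly_Mapping.keys q" by blast
  hence "w m = w x + w y" "w x \<le> a" "w y \<le> b" using assms by (auto simp: addw_def Ub_def)
  thus "w m \<le> a + b" by simp
qed

lemma Ub_one: assumes "addw w" "0 \<le> c" shows "Ub w c 1"
  using assms addw_0[OF assms(1)] by (simp add: Ub_def)

lemma Ub_power: assumes w: "addw w" and p: "Ub w a p" shows "Ub w (real n * a) (p ^ n)"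
proof (induction n)
  case 0 show ?case using Ub_one[OF w, of 0] by simp
next
  case (Suc n)
  have "Ub w (a + real n * a) (p * p ^ n)" by (rule Ub_mult[OF w p Suc])
  thus ?case by (simp add: algebra_simps)
qed

lemma Ub_prod: assumes w: "addw w" and "finite S" and "\<And>j. j \<in> S \<Longrightarrow> Ub w (a j) (p j)"
  shows "Ub w (\<Sum>j\<in>S. a j) (\<Prod>j\<in>S. p j)"
  using assms(2,3)
proof (induction S rule: finite_induct)
  case empty show ?case using Ub_one[OF w, of 0] by simp
next
  case (insert x F)
  have "Ub w (a x + (\<Sum>j\<in>F. a j)) (p x * (\<Prod>j\<in>F. p j))"
    by (rule Ub_mult[OF w]) (use insert in auto)
  thus ?case using insert by simp
qed

lemma Ub_Const_mult: "Ub w c p \<Longrightarrow> Ub w c (Const a * p)"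
  using keys_Const_mult[of a p] by (auto simp: Ub_def)

lemma Const_mult_Var: "Const c * Var i = Poly_Mapping.single (Poly_Mapping.single i 1) c"
  by (simp add: Var_def Const_mult_single)

lemma Ub_lin: assumes "\<And>i. i \<le> r \<Longrightarrow> A j i \<noteq> 0 \<Longrightarrow> w (Poly_Mapping.single i 1) \<le> a"
  shows "Ub w a (lin r A j)"
  unfolding lin_def
proof (rule Ub_sum)
  fix i assume i: "i \<in> {..r}"
  show "Ub w a (Const (A j i) * Var i)"
  proof (cases "A j i = 0")
    case True thus ?thesis by (simp add: Ub_zero)
  next
    case False thus ?thesis using assms i by (simp add: Const_mult_Var Ub_def)
  qed
qed

lemma Ub_mon: assumes w: "addw w" and "\<And>j. j \<in> Poly_Mapping.keys m \<Longrightarrow> Ub w (a j) (lin r A j)"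
  shows "Ub w (\<Sum>j\<in>Poly_Mapping.keys m. real (Poly_Mapping.lookup m j) * a j) (mon r A m)"
  unfolding mon_def by (rule Ub_prod[OF w]) (auto intro: Ub_power[OF w] assms(2))

lemma Ub_subst: assumes "\<And>m. m \<in> Poly_Mapping.keys f \<Longrightarrow> Ub w c (mon r A m)"
  shows "Ub w c (subst r A f)"
  unfolding subst_mon by (rule Ub_sum) (auto intro: Ub_Const_mult assms)

lemma addw_lookup: "addw (\<lambda>m. real (Poly_Mapping.lookup m i))"
  by (simp add: addw_def lookup_add)

definition tdeg :: "nat \<Rightarrow> (nat \<Rightarrow>\<^sub>0 nat) \<Rightarrow> nat" where
  "tdeg r m = (\<Sum>i\<le>r. Poly_Mapping.lookup m i)"

lemma addw_tdeg: "addw (\<lambda>m. real (tdeg r m))"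
  by (simp add: addw_def tdeg_def lookup_add sum.distrib)

lemma addw_pairing: "addw (\<lambda>m. - pairing r lam m)"
  by (simp add: addw_def pairing_def lookup_add sum.distrib algebra_simps)

lemma sum_keys_le: fixes m :: "nat \<Rightarrow>\<^sub>0 nat" and r :: nat
  assumes "Poly_Mapping.keys m \<subseteq> {..r}" and g0: "\<And>j. g j 0 = 0"
  shows "(\<Sum>j\<in>Poly_Mapping.keys m. g j (Poly_Mapping.lookup m j)) = (\<Sum>j\<le>r. g j (Poly_Mapping.lookup m j))"
proof (rule sum.mono_neutral_left)
  show "finite {..r}" by simp
  show "Poly_Mapping.keys m \<subseteq> {..r}" by (rule assms)
  show "\<forall>j\<in>{..r} - Poly_Mapping.keys m. g j (Poly_Mapping.lookup m j) = 0"
    using g0 by (auto simp: not_in_keys_iff_lookup_eq_zero)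
qed

lemma tdeg_single: "tdeg r (Poly_Mapping.single i (Suc 0)) \<le> Suc 0"
proof -
  have "tdeg r (Poly_Mapping.single i (Suc 0)) = (\<Sum>x\<le>r. if x = i then 1 else 0)"
    unfolding tdeg_def by (rule sum.cong) (auto simp: lookup_single when_def)
  thus ?thesis by simp
qed

lemma mdeg_tdeg: assumes "Poly_Mapping.keys m \<subseteq> {..r}" shows "mdeg m = tdeg r m"
  unfolding mdeg_def tdeg_def using sum_keys_le[OF assms, of "\<lambda>j x. x"] by simp

lemma tdeg_single': "real (tdeg r (Poly_Mapping.single i 1)) \<le> 1"
  using tdeg_single[of r i] by simp

definition good :: "nat \<Rightarrow> nat \<Rightarrow> 'k::field mpoly \<Rightarrow> bool" where
  "good r d p \<longleftrightarrow> (\<forall>m\<in>Poly_Mapping.keys p. Poly_Mapping.keys m \<subseteq> {..r} \<and> tdeg r m \<le> d)"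

lemma form_good: "is_form r d f \<Longrightarrow> good r d f"
  by (auto simp: is_form_def good_def mdeg_tdeg[symmetric])

lemma subst_vars: assumes "m \<in> Poly_Mapping.keys (subst r A f)" shows "Poly_Mapping.keys m \<subseteq> {..r}"
proof
  fix i assume i: "i \<in> Poly_Mapping.keys m"
  show "i \<in> {..r}"
  proof (rule ccontr)
    assume "i \<notin> {..r}"
    hence ir: "r < i" by simp
    have "Ub (\<lambda>m. real (Poly_Mapping.lookup m i)) 0 (subst r A f)"
    proof (rule Ub_subst)
      fix m' assume "m' \<in> Poly_Mapping.keys f"
      have "Ub (\<lambda>m. real (Poly_Mapping.lookup m i))
         (\<Sum>j\<in>Poly_Mapping.keys m'. real (Poly_Mapping.lookup m' j) * 0) (mon r A m')"
        by (rule Ub_mon[OF addw_lookup], rule Ub_lin) (use ir in \<open>auto simp: lookup_single\<close>)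
      thus "Ub (\<lambda>m. real (Poly_Mapping.lookup m i)) 0 (mon r A m')" by simp
    qed
    hence "Poly_Mapping.lookup m i = 0" using assms by (auto simp: Ub_def)
    thus False using i by (simp add: in_keys_iff)
  qed
qed

lemma good_subst: assumes "good r d f" shows "good r d (subst r A f)"
proof -
  have "Ub (\<lambda>m. real (tdeg r m)) (real d) (subst r A f)"
  proof (rule Ub_subst)
    fix m assume m: "m \<in> Poly_Mapping.keys f"
    have "Ub (\<lambda>m. real (tdeg r m))
         (\<Sum>j\<in>Poly_Mapping.keys m. real (Poly_Mapping.lookup m j) * 1) (mon r A m)"
    proof (rule Ub_mon[OF addw_tdeg], rule Ub_lin)
      fix j i show "real (tdeg r (Poly_Mapping.single i 1)) \<le> 1" by (rule tdeg_single')
    qed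
    moreover have "(\<Sum>j\<in>Poly_Mapping.keys m. real (Poly_Mapping.lookup m j) * 1) = real (tdeg r m)"
    proof -
      have "real (tdeg r m) = real (mdeg m)" using m assms mdeg_tdeg[of m r] by (simp add: good_def)
      also have "\<dots> = (\<Sum>j\<in>Poly_Mapping.keys m. real (Poly_Mapping.lookup m j))"
        by (simp add: mdeg_def of_nat_sum)
      finally show ?thesis by simp
    qed
    moreover have "tdeg r m \<le> d" using m assms by (simp add: good_def)
    ultimately show "Ub (\<lambda>m. real (tdeg r m)) (real d) (mon r A m)"
      by (auto elim: Ub_mono)
  qed
  thus ?thesis using subst_vars[of _ r A f] unfolding good_def Ub_def by auto
qed

lemma pairing_keys: assumes "Poly_Mapping.keys m \<subseteq> {..r}"
  shows "pairing r lam m = (\<Sum>j\<in>Poly_Mapping.keys m. real (Poly_Mapping.lookup m j) * real_of_int (lam j))"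
  unfolding pairing_def using sum_keys_le[OF assms, of "\<lambda>j x. real x * real_of_int (lam j)"]
  by (simp add: mult.commute)

lemma pairing_single: assumes "i \<le> r" shows "pairing r lam (Poly_Mapping.single i (Suc 0)) = real_of_int (lam i)"
proof -
  have "pairing r lam (Poly_Mapping.single i (Suc 0)) = (\<Sum>x\<le>r. if x = i then real_of_int (lam i) else 0)"
    unfolding pairing_def by (rule sum.cong) (auto simp: lookup_single when_def)
  thus ?thesis using assms by simp
qed

lemma subst_pairing:
  assumes F: "good r d F"
    and A: "\<And>j i. j \<le> r \<Longrightarrow> i \<le> r \<Longrightarrow> A j i \<noteq> 0 \<Longrightarrow> mu j \<le> lam i"
    and c: "\<And>m. m \<in> Poly_Mapping.keys F \<Longrightarrow> c \<le> pairing r mu m"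
    and m: "m \<in> Poly_Mapping.keys (subst r A F)"
  shows "c \<le> pairing r lam m"
proof -
  have "Ub (\<lambda>m. - pairing r lam m) (- c) (subst r A F)"
  proof (rule Ub_subst)
    fix m assume m: "m \<in> Poly_Mapping.keys F"
    have km: "Poly_Mapping.keys m \<subseteq> {..r}" using F m by (simp add: good_def)
    have "Ub (\<lambda>m. - pairing r lam m)
         (\<Sum>j\<in>Poly_Mapping.keys m. real (Poly_Mapping.lookup m j) * (- real_of_int (mu j))) (mon r A m)"
    proof (rule Ub_mon[OF addw_pairing], rule Ub_lin)
      fix j i assume j: "j \<in> Poly_Mapping.keys m" and i: "i \<le> r" and a: "A j i \<noteq> 0"
      have jr: "j \<le> r" using km j by auto
      show "- pairing r lam (Poly_Mapping.single i 1) \<le> - real_of_int (mu j)"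
        using A[OF jr i a] by (simp add: pairing_single[OF i])
    qed
    moreover have "(\<Sum>j\<in>Poly_Mapping.keys m. real (Poly_Mapping.lookup m j) * (- real_of_int (mu j))) = - pairing r mu m"
      by (simp add: pairing_keys[OF km] sum_negf)
    ultimately show "Ub (\<lambda>m. - pairing r lam m) (- c) (mon r A m)"
      using c[OF m] by (auto elim: Ub_mono)
  qed
  thus ?thesis using m by (auto simp: Ub_def)
qed

lemma subst_x0:
  assumes F: "good r d F"
    and C: "\<And>j. 1 \<le> j \<Longrightarrow> j \<le> r \<Longrightarrow> C j 0 = 0"
    and M: "\<And>m. m \<in> Poly_Mapping.keys F \<Longrightarrow> Poly_Mapping.lookup m 0 \<le> M"
    and m: "m \<in> Poly_Mapping.keys (subst r C F)"
  shows "Poly_Mapping.lookup m 0 \<le> M"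
proof -
  have "Ub (\<lambda>m. real (Poly_Mapping.lookup m 0)) (real M) (subst r C F)"
  proof (rule Ub_subst)
    fix m assume m: "m \<in> Poly_Mapping.keys F"
    have km: "Poly_Mapping.keys m \<subseteq> {..r}" using F m by (simp add: good_def)
    have "Ub (\<lambda>m. real (Poly_Mapping.lookup m 0))
         (\<Sum>j\<in>Poly_Mapping.keys m. real (Poly_Mapping.lookup m j) * (if j = 0 then 1 else 0)) (mon r C m)"
    proof (rule Ub_mon[OF addw_lookup], rule Ub_lin)
      fix j i assume j: "j \<in> Poly_Mapping.keys m" and i: "i \<le> r" and c: "C j i \<noteq> 0"
      have jr: "j \<le> r" using km j by auto
      show "real (Poly_Mapping.lookup (Poly_Mapping.single i 1) 0) \<le> (if j = 0 then 1 else 0)"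
      proof (cases "i = 0")
        case True
        hence "j = 0" using C[of j] jr c by (cases "j = 0") auto
        thus ?thesis by (simp add: lookup_single when_def)
      next
        case False thus ?thesis by (simp add: lookup_single when_def)
      qed
    qed
    moreover have "(\<Sum>j\<in>Poly_Mapping.keys m. real (Poly_Mapping.lookup m j) * (if j = 0 then 1 else 0)) = real (Poly_Mapping.lookup m 0)"
      by (simp add: if_distrib cong: if_cong) (auto simp: in_keys_iff)
    ultimately show "Ub (\<lambda>m. real (Poly_Mapping.lookup m 0)) (real M) (mon r C m)"
      using M[OF m] by (auto elim: Ub_mono)
  qed
  thus ?thesis using m by (auto simp: Ub_def)
qed



definition phi :: "nat \<Rightarrow> 'k::field mpoly \<Rightarrow> (nat \<Rightarrow> int) \<Rightarrow> real" where
  "phi r G lam = Min ((\<lambda>m. pairing r lam m) ` Poly_Mapping.keys G) / ops_norm r lam"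

lemma Delta_phi: "Delta r G = (SUP lam\<in>OPS r. phi r G lam)"
  by (simp add: Delta_def phi_def)

lemma OPS_ne: assumes "1 \<le> r" shows "OPS r \<noteq> {}"
proof -
  define lam :: "nat \<Rightarrow> int" where "lam = (\<lambda>i. (if i = 0 then 1 else 0) + (if i = 1 then -1 else 0))"
  have "(\<Sum>i\<le>r. lam i) = (\<Sum>i\<le>r. (if i = 0 then 1 else 0)) + (\<Sum>i\<le>r. (if i = 1 then -1 else 0))"
    by (simp add: lam_def sum.distrib)
  also have "\<dots> = 0" using assms by simp
  finally have "lam \<in> OPS r" unfolding OPS_def using assms by (auto simp: lam_def intro!: exI[of _ 0])
  thus ?thesis by blast
qed

lemma norm_pos: assumes "lam \<in> OPS r" shows "0 < ops_norm r lam"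
proof -
  obtain i where i: "i \<le> r" "lam i \<noteq> 0" using assms by (auto simp: OPS_def)
  have "0 < (\<Sum>i\<le>r. (real_of_int (lam i))\<^sup>2)"
    by (rule sum_pos2[of _ i]) (use i in auto)
  thus ?thesis by (simp add: ops_norm_def)
qed

lemma abs_le_norm: assumes "i \<le> r" shows "\<bar>real_of_int (lam i)\<bar> \<le> ops_norm r lam"
proof -
  have "(real_of_int (lam i))\<^sup>2 \<le> (\<Sum>i\<le>r. (real_of_int (lam i))\<^sup>2)"
    by (rule member_le_sum) (use assms in auto)
  hence "sqrt ((real_of_int (lam i))\<^sup>2) \<le> ops_norm r lam"
    unfolding ops_norm_def by (rule real_sqrt_le_mono)
  thus ?thesis by simp
qed

lemma phi_bound:
  assumes G: "good r d G" and G0: "G \<noteq> 0" and lam: "lam \<in> OPS r"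
  shows "phi r G lam \<le> real d"
proof -
  obtain m0 where m0: "m0 \<in> Poly_Mapping.keys G" using G0 by (metis all_not_in_conv keys_eq_empty)
  let ?N = "ops_norm r lam"
  have N: "0 < ?N" by (rule norm_pos[OF lam])
  have "Min ((\<lambda>m. pairing r lam m) ` Poly_Mapping.keys G) \<le> pairing r lam m0"
    using m0 by (intro Min_le) auto
  also have "\<dots> = (\<Sum>i\<le>r. real_of_int (lam i) * real (Poly_Mapping.lookup m0 i))"
    by (simp add: pairing_def)
  also have "\<dots> \<le> (\<Sum>i\<le>r. ?N * real (Poly_Mapping.lookup m0 i))"
  proof (rule sum_mono)
    fix i assume "i \<in> {..r}"
    hence "real_of_int (lam i) \<le> ?N" using abs_le_norm[of i r lam] by auto
    thus "real_of_int (lam i) * real (Poly_Mapping.lookup m0 i) \<le> ?N * real (Poly_Mapping.lookup m0 i)"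
      by (intro mult_right_mono) auto
  qed
  also have "\<dots> = ?N * real (tdeg r m0)"
    by (simp add: tdeg_def sum_distrib_left of_nat_sum)
  also have "\<dots> \<le> ?N * real d"
    using m0 G N by (intro mult_left_mono) (auto simp: good_def)
  finally have "Min ((\<lambda>m. pairing r lam m) ` Poly_Mapping.keys G) \<le> ?N * real d" .
  thus ?thesis unfolding phi_def using N by (simp add: pos_divide_le_eq mult.commute)
qed

lemma phi_bdd: assumes "good r d G" "G \<noteq> 0" shows "bdd_above ((phi r G) ` OPS r)"
  using phi_bound[OF assms] by (intro bdd_aboveI2) auto

lemma Delta_le: assumes "good r d G" "G \<noteq> 0" "1 \<le> r" shows "Delta r G \<le> real d"
  unfolding Delta_phi using phi_bound[OF assms(1,2)] OPS_ne[OF assms(3)]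
  by (intro cSUP_least) auto

lemma phi_le_Delta: assumes "good r d G" "G \<noteq> 0" "lam \<in> OPS r" shows "phi r G lam \<le> Delta r G"
  unfolding Delta_phi using phi_bdd[OF assms(1,2)] assms(3) by (intro cSUP_upper) auto

lemma phi_ge:
  assumes G0: "G \<noteq> 0" and lam: "lam \<in> OPS r" and c: "\<And>m. m \<in> Poly_Mapping.keys G \<Longrightarrow> c \<le> pairing r lam m"
  shows "c / ops_norm r lam \<le> phi r G lam"
proof -
  have ne: "Poly_Mapping.keys G \<noteq> {}" using G0 by simp
  have "c \<le> Min ((\<lambda>m. pairing r lam m) ` Poly_Mapping.keys G)"
    using ne c by (intro Min.boundedI) auto
  thus ?thesis unfolding phi_def using norm_pos[OF lam] by (intro divide_right_mono) auto
qed

lemma phi_eq_Min: "phi r G lam = Min ((\<lambda>m. pairing r lam m) ` Poly_Mapping.keys G) / ops_norm r lam"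
  by (simp add: phi_def)

lemma Min_pairing_le: "m \<in> Poly_Mapping.keys G \<Longrightarrow> Min ((\<lambda>m. pairing r lam m) ` Poly_Mapping.keys G) \<le> pairing r lam m"
  by (intro Min_le) auto

definition sw :: "nat \<Rightarrow> nat \<Rightarrow> nat" where
  "sw k i = (if i = 0 then k else if i = k then 0 else i)"

lemma sw_sw [simp]: "sw k (sw k i) = i" by (simp add: sw_def)

lemma sw_le: "k \<le> r \<Longrightarrow> i \<le> r \<Longrightarrow> sw k i \<le> r" by (simp add: sw_def)

lemma sw_bij: assumes "k \<le> r" shows "bij_betw (sw k) {..r} {..r}"
  by (rule bij_betw_byWitness[of _ "sw k"]) (use assms sw_le in auto)

lemma sum_sw: assumes "k \<le> r" shows "(\<Sum>i\<le>r. g (sw k i)) = (\<Sum>i\<le>r. g i)"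
  using sum.reindex_bij_betw[OF sw_bij[OF assms], of g] by simp

lemma OPS_sw: assumes "k \<le> r" "lam \<in> OPS r" shows "(lam \<circ> sw k) \<in> OPS r"
proof -
  have "(\<Sum>i\<le>r. (lam \<circ> sw k) i) = 0" using sum_sw[OF assms(1), of lam] assms(2) by (simp add: OPS_def)
  moreover have "\<forall>i>r. (lam \<circ> sw k) i = 0" using assms by (auto simp: OPS_def sw_def)
  moreover obtain i where "i \<le> r" "lam i \<noteq> 0" using assms(2) by (auto simp: OPS_def)
  hence "sw k i \<le> r \<and> (lam \<circ> sw k) (sw k i) \<noteq> 0" using sw_le[OF assms(1)] by simp
  ultimately show ?thesis unfolding OPS_def by blast
qed

lemma norm_sw: assumes "k \<le> r" shows "ops_norm r (lam \<circ> sw k) = ops_norm r lam"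
  unfolding ops_norm_def using sum_sw[OF assms, of "\<lambda>i. (real_of_int (lam i))\<^sup>2"] by simp

definition Em :: "(nat \<Rightarrow> 'k::field) \<Rightarrow> nat \<Rightarrow> nat \<Rightarrow> nat \<Rightarrow> 'k" where
  "Em p k = (\<lambda>j i. if i = k then p j else if i = j then 1 else 0)"

definition Eminv :: "(nat \<Rightarrow> 'k::field) \<Rightarrow> nat \<Rightarrow> nat \<Rightarrow> nat \<Rightarrow> 'k" where
  "Eminv p k = (\<lambda>j i. if i = k then (if j = k then 1 / p k else - p j / p k) else if i = j then 1 else 0)"

definition Pm :: "nat \<Rightarrow> nat \<Rightarrow> nat \<Rightarrow> 'k::field" where
  "Pm k = (\<lambda>j i. if i = sw k j then 1 else 0)"

lemma sum_if_two:
  fixes X :: "nat \<Rightarrow> 'k::field"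
  assumes "i \<noteq> k" "i \<le> r" "k \<le> r"
  shows "(\<Sum>j\<le>r. (if j = k then a else if j = i then b else 0) * X j) = a * X k + b * X i"
proof -
  have "(\<Sum>j\<le>r. (if j = k then a else if j = i then b else 0) * X j)
      = (\<Sum>j\<le>r. (if j = k then a * X k else 0) + (if j = i then b * X i else 0))"
    by (rule sum.cong) (use assms in auto)
  also have "\<dots> = a * X k + b * X i" using assms by (simp add: sum.distrib)
  finally show ?thesis .
qed

lemma Em_inv: assumes pk: "p k \<noteq> 0" and k: "k \<le> r" shows "isI r (mm r (Em p k) (Eminv p k))"
  unfolding isI_def
proof (intro allI impI)
  fix i l assume i: "i \<le> r" and l: "l \<le> r"
  show "mm r (Em p k) (Eminv p k) i l = (if i = l then 1 else 0)"
  proof (cases "i = k")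
    case True
    have "mm r (Em p k) (Eminv p k) i l = (\<Sum>j\<le>r. (if j = k then p k * Eminv p k k l else 0))"
      unfolding mm_def by (rule sum.cong) (auto simp: Em_def True)
    also have "\<dots> = p k * Eminv p k k l" using k by simp
    also have "\<dots> = (if i = l then 1 else 0)" using True pk by (cases "l = k") (auto simp: Eminv_def)
    finally show ?thesis .
  next
    case False
    have "mm r (Em p k) (Eminv p k) i l = (\<Sum>j\<le>r. (if j = k then p i else if j = i then 1 else 0) * Eminv p k j l)"
      unfolding mm_def by (rule sum.cong) (auto simp: Em_def)
    also have "\<dots> = p i * Eminv p k k l + 1 * Eminv p k i l"
      by (rule sum_if_two) (use False i k in auto)
    also have "\<dots> = (if i = l then 1 else 0)" using False pk by (auto simp: Eminv_def field_simps)
    finally show ?thesis .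
  qed
qed

lemma Em_GL: "p k \<noteq> 0 \<Longrightarrow> k \<le> r \<Longrightarrow> Em p k \<in> GL r"
  using Em_inv GL_iff by blast

lemma Pm_inv: assumes k: "k \<le> r" shows "isI r (mm r (Pm k) (Pm k))"
  unfolding isI_def
proof (intro allI impI)
  fix i l assume i: "i \<le> r" and l: "l \<le> r"
  have "mm r (Pm k) (Pm k) i l = (\<Sum>j\<le>r. if j = sw k i then (if l = sw k j then 1 else 0) else 0)"
    unfolding mm_def by (rule sum.cong) (auto simp: Pm_def)
  also have "\<dots> = (if l = i then 1 else 0)" using sw_le[OF k i] by simp
  finally show "mm r (Pm k) (Pm k) i l = (if i = l then 1 else 0)" by auto
qed

lemma Pm_GL: "k \<le> r \<Longrightarrow> Pm k \<in> GL r"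
  using Pm_inv GL_iff by blast

lemma EP_col0: assumes "k \<le> r" "j \<le> r" shows "mm r (Em p k) (Pm k) j 0 = p j"
proof -
  have "mm r (Em p k) (Pm k) j 0 = (\<Sum>i\<le>r. if i = k then Em p k j k else 0)"
    unfolding mm_def by (rule sum.cong) (auto simp: Pm_def sw_def)
  thus ?thesis using assms by (simp add: Em_def)
qed



lemma lin_isI: assumes "isI r X" "j \<le> r" shows "lin r X j = Var j"
proof -
  have "lin r X j = (\<Sum>i\<le>r. if i = j then Var j else 0)"
    unfolding lin_def by (rule sum.cong) (use assms in \<open>auto simp: isI_def\<close>)
  thus ?thesis using assms by simp
qed

lemma Var_power: "(Var j :: 'k::field mpoly) ^ n = Poly_Mapping.single (Poly_Mapping.single j n) 1"
proof (induction n)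
  case 0 show ?case by simp
next
  case (Suc n)
  have "(Var j :: 'k mpoly) ^ Suc n = Var j * Var j ^ n" by (rule power_Suc)
  also have "\<dots> = Poly_Mapping.single (Poly_Mapping.single j 1) 1 * Poly_Mapping.single (Poly_Mapping.single j n) 1"
    unfolding Suc.IH by (simp only: Var_def)
  also have "\<dots> = Poly_Mapping.single (Poly_Mapping.single j 1 + Poly_Mapping.single j n) 1"
    by (simp add: mult_single)
  also have "Poly_Mapping.single j 1 + Poly_Mapping.single j n = Poly_Mapping.single j (Suc n)"
    by (simp add: single_add[symmetric])
  finally show ?case .
qed

lemma prod_single: "finite S \<Longrightarrow> (\<Prod>j\<in>S. Poly_Mapping.single (g j) (1::'k::field)) = Poly_Mapping.single (\<Sum>j\<in>S. g j) 1"
  by (induction S rule: finite_induct) (auto simp: mult_single)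

lemma mon_isI: fixes X :: "nat \<Rightarrow> nat \<Rightarrow> 'k::field"
  assumes "isI r X" "Poly_Mapping.keys m \<subseteq> {..r}" shows "mon r X m = Poly_Mapping.single m 1"
proof -
  have "mon r X m = (\<Prod>j\<in>Poly_Mapping.keys m. Poly_Mapping.single (Poly_Mapping.single j (Poly_Mapping.lookup m j)) (1::'k))"
    unfolding mon_def by (rule prod.cong) (use assms in \<open>auto simp: lin_isI Var_power\<close>)
  also have "\<dots> = Poly_Mapping.single (\<Sum>j\<in>Poly_Mapping.keys m. Poly_Mapping.single j (Poly_Mapping.lookup m j)) 1"
    by (simp add: prod_single)
  also have "(\<Sum>j\<in>Poly_Mapping.keys m. Poly_Mapping.single j (Poly_Mapping.lookup m j)) = m"
    by (rule poly_expand[symmetric])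
  finally show ?thesis .
qed

lemma subst_cong_good:
  assumes G: "good r d G" and XY: "\<And>j i. j \<le> r \<Longrightarrow> i \<le> r \<Longrightarrow> X j i = Y j i"
  shows "subst r X G = subst r Y G"
proof -
  have l: "lin r X j = lin r Y j" if "j \<le> r" for j
    unfolding lin_def by (rule sum.cong) (use that XY in auto)
  have "mon r X m = mon r Y m" if "m \<in> Poly_Mapping.keys G" for m
  proof -
    have "Poly_Mapping.keys m \<subseteq> {..r}" using G that by (simp add: good_def)
    thus ?thesis unfolding mon_def by (intro prod.cong) (auto simp: l)
  qed
  thus ?thesis unfolding subst_mon by (intro sum.cong) auto
qed

lemma subst_isI: assumes "isI r X" "good r d G" shows "subst r X G = G"
proof -
  have "subst r X G = (\<Sum>m\<in>Poly_Mapping.keys G. Poly_Mapping.single m (Poly_Mapping.lookup G m))"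
    unfolding subst_mon
  proof (rule sum.cong)
    fix m assume m: "m \<in> Poly_Mapping.keys G"
    hence "Poly_Mapping.keys m \<subseteq> {..r}" using assms by (simp add: good_def)
    thus "Const (Poly_Mapping.lookup G m) * mon r X m = Poly_Mapping.single m (Poly_Mapping.lookup G m)"
      using assms by (simp add: mon_isI Const_mult_single)
  qed simp
  also have "\<dots> = G" by (rule poly_expand[symmetric])
  finally show ?thesis .
qed

lemma subst_inv: assumes "isI r (mm r X Y)" "good r d G" shows "subst r Y (subst r X G) = G"
  using assms by (simp add: subst_comp subst_isI)

lemma subst_nonzero: assumes "X \<in> GL r" "good r d G" "G \<noteq> 0" shows "subst r X G \<noteq> 0"
proof
  assume "subst r X G = 0"
  obtain Y where "isI r (mm r X Y)" using assms GL_iff by blast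
  hence "subst r Y (subst r X G) = G" using assms subst_inv by blast
  thus False using \<open>subst r X G = 0\<close> assms by simp
qed

lemma mult_e_ge:
  assumes G: "good r d G" and G0: "G \<noteq> 0" and H: "subst r C G \<noteq> 0"
    and C: "\<And>j. 1 \<le> j \<Longrightarrow> j \<le> r \<Longrightarrow> C j 0 = 0"
  shows "mult_e d G \<le> mult_e d (subst r C G)"
proof -
  let ?S = "(\<lambda>m. Poly_Mapping.lookup m 0) ` Poly_Mapping.keys G"
  define M where "M = Max ?S"
  have fS: "finite ?S" and nS: "?S \<noteq> {}" using G0 by auto
  have "M \<in> ?S" unfolding M_def using fS nS by (rule Max_in)
  then obtain ms where ms: "ms \<in> Poly_Mapping.keys G" "Poly_Mapping.lookup ms 0 = M" by auto
  have "mult_e d G \<le> d - M"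
    unfolding mult_e_def using ms by (intro Min_le) auto
  also have "d - M \<le> mult_e d (subst r C G)"
    unfolding mult_e_def
  proof (rule Min.boundedI)
    show "finite ((\<lambda>m. d - Poly_Mapping.lookup m 0) ` Poly_Mapping.keys (subst r C G))" by simp
    show "(\<lambda>m. d - Poly_Mapping.lookup m 0) ` Poly_Mapping.keys (subst r C G) \<noteq> {}" using H by simp
  next
    fix a assume "a \<in> (\<lambda>m. d - Poly_Mapping.lookup m 0) ` Poly_Mapping.keys (subst r C G)"
    then obtain m where m: "m \<in> Poly_Mapping.keys (subst r C G)" "a = d - Poly_Mapping.lookup m 0" by auto
    have "Poly_Mapping.lookup m 0 \<le> M"
    proof (rule subst_x0[OF G C _ m(1)])
      fix m' assume "m' \<in> Poly_Mapping.keys G"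
      thus "Poly_Mapping.lookup m' 0 \<le> M" unfolding M_def using fS by (intro Max_ge) auto
    qed auto
    thus "d - M \<le> a" using m by simp
  qed
  finally show ?thesis .
qed

lemma mm_col0: assumes "\<And>l. 1 \<le> l \<Longrightarrow> l \<le> r \<Longrightarrow> C l 0 = 0"
  shows "mm r D C j 0 = D j 0 * C 0 0"
proof -
  have "mm r D C j 0 = (\<Sum>l\<le>r. if l = 0 then D j 0 * C 0 0 else 0)"
    unfolding mm_def by (rule sum.cong) (use assms in auto)
  thus ?thesis by simp
qed

lemma mult_e_C:
  assumes CG: "C \<in> GL r" and C: "\<And>j. 1 \<le> j \<Longrightarrow> j \<le> r \<Longrightarrow> C j 0 = 0" and G: "good r d G"
  shows "mult_e d (subst r C G) = mult_e d G"
proof (cases "G = 0")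
  case True thus ?thesis by simp
next
  case False
  obtain C' where C'1: "isI r (mm r C' C)" and C'2: "isI r (mm r C C')" and C'G: "C' \<in> GL r"
    using GL_left_inv[OF CG] by blast
  have col: "mm r C' C j 0 = C' j 0 * C 0 0" for j by (rule mm_col0[where C=C and D="C'" and r=r, OF C])
  have "C' 0 0 * C 0 0 = 1" using C'1 col[of 0] by (simp add: isI_def)
  hence c00: "C 0 0 \<noteq> 0" by auto
  have C': "C' j 0 = 0" if "1 \<le> j" "j \<le> r" for j
  proof -
    have "C' j 0 * C 0 0 = 0" using C'1 col[of j] that by (simp add: isI_def)
    thus ?thesis using c00 by simp
  qed
  define H where "H = subst r C G"
  have H0: "H \<noteq> 0" unfolding H_def by (rule subst_nonzero[OF CG G False])
  have gH: "good r d H" unfolding H_def by (rule good_subst[OF G])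
  have bk: "subst r C' H = G" unfolding H_def by (rule subst_inv[OF C'2 G])
  have "mult_e d G \<le> mult_e d H" unfolding H_def
    by (rule mult_e_ge[OF G False]) (use H0 C in \<open>auto simp: H_def\<close>)
  moreover have "mult_e d H \<le> mult_e d G"
  proof -
    have "mult_e d H \<le> mult_e d (subst r C' H)"
      by (rule mult_e_ge[OF gH H0]) (use bk False C' in auto)
    thus ?thesis using bk by simp
  qed
  ultimately show ?thesis unfolding H_def by simp
qed

lemma mult_e_col:
  assumes AG: "A \<in> GL r" and BG: "B \<in> GL r" and AB: "\<And>i. i \<le> r \<Longrightarrow> A i 0 = B i 0" and G: "good r d G"
  shows "mult_e d (subst r A G) = mult_e d (subst r B G)"
proof -
  obtain A' where A'1: "isI r (mm r A' A)" and A'2: "isI r (mm r A A')" and A'G: "A' \<in> GL r"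
    using GL_left_inv[OF AG] by blast
  define C where "C = mm r A' B"
  have CG: "C \<in> GL r" unfolding C_def by (rule GL_mm[OF A'G BG])
  have C0: "C j 0 = 0" if "1 \<le> j" "j \<le> r" for j
  proof -
    have "C j 0 = mm r A' A j 0" unfolding C_def mm_def by (rule sum.cong) (auto simp: AB)
    thus ?thesis using A'1 that by (simp add: isI_def)
  qed
  have "subst r C (subst r A G) = subst r (mm r A C) G" by (rule subst_comp)
  also have "\<dots> = subst r B G"
  proof (rule subst_cong_good[OF G])
    fix j i assume "j \<le> r" "i \<le> r"
    have "mm r A C j i = mm r (mm r A A') B j i" unfolding C_def by (simp add: mm_assoc)
    also have "\<dots> = B j i" using mm_isI_left[OF A'2 \<open>j \<le> r\<close>] .
    finally show "mm r A C j i = B j i" .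
  qed
  finally have e: "subst r C (subst r A G) = subst r B G" .
  have "mult_e d (subst r C (subst r A G)) = mult_e d (subst r A G)"
    by (rule mult_e_C[OF CG C0 good_subst[OF G]])
  thus ?thesis using e by simp
qed

lemma col_exists: assumes "q \<in> proj_pts r" shows "\<exists>A. A \<in> GL r \<and> (\<forall>i\<le>r. A i 0 = q i)"
proof -
  obtain k where k: "k \<le> r" "q k \<noteq> 0" using assms by (auto simp: proj_pts_def)
  have "mm r (Em q k) (Pm k) \<in> GL r" by (rule GL_mm[OF Em_GL[of q k r, OF k(2) k(1)] Pm_GL[OF k(1)]])
  moreover have "\<forall>i\<le>r. mm r (Em q k) (Pm k) i 0 = q i" using EP_col0[OF k(1)] by blast
  ultimately show ?thesis by blast
qed

lemma mult_at_eq: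
  assumes q: "q \<in> proj_pts r" and BG: "B \<in> GL r" and Bq: "\<And>i. i \<le> r \<Longrightarrow> B i 0 = q i" and G: "good r d G"
  shows "mult_at r d G q = mult_e d (subst r B G)"
proof -
  define A where "A = (SOME A. A \<in> GL r \<and> (\<forall>i\<le>r. A i 0 = q i))"
  have A: "A \<in> GL r \<and> (\<forall>i\<le>r. A i 0 = q i)"
    unfolding A_def by (rule someI_ex[OF col_exists[OF q]])
  have "mult_at r d G q = mult_e d (subst r A G)" by (simp add: mult_at_def A_def)
  also have "\<dots> = mult_e d (subst r B G)"
    by (rule mult_e_col[OF _ BG _ G]) (use A Bq in auto)
  finally show ?thesis .
qed

definition mv :: "nat \<Rightarrow> (nat \<Rightarrow> nat \<Rightarrow> 'k::field) \<Rightarrow> (nat \<Rightarrow> 'k) \<Rightarrow> nat \<Rightarrow> 'k" where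
  "mv r X q = (\<lambda>j. if j \<le> r then \<Sum>i\<le>r. X j i * q i else 0)"

lemma mv_mv: "mv r X (mv r Y q) = mv r (mm r X Y) q"
proof
  fix j
  show "mv r X (mv r Y q) j = mv r (mm r X Y) q j"
  proof (cases "j \<le> r")
    case True
    have "(\<Sum>i\<le>r. X j i * mv r Y q i) = (\<Sum>i\<le>r. \<Sum>l\<le>r. X j i * Y i l * q l)"
      by (rule sum.cong) (auto simp: mv_def sum_distrib_left mult.assoc)
    also have "\<dots> = (\<Sum>l\<le>r. \<Sum>i\<le>r. X j i * Y i l * q l)" by (rule sum.swap)
    also have "\<dots> = (\<Sum>l\<le>r. mm r X Y j l * q l)" by (simp add: mm_def sum_distrib_right)
    finally show ?thesis using True by (simp add: mv_def)
  qed (simp add: mv_def)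
qed

lemma mv_isI: assumes "isI r X" "\<And>i. r < i \<Longrightarrow> q i = 0" shows "mv r X q = q"
proof
  fix j show "mv r X q j = q j"
  proof (cases "j \<le> r")
    case True
    have "(\<Sum>i\<le>r. X j i * q i) = (\<Sum>i\<le>r. if i = j then q j else 0)"
      by (rule sum.cong) (use assms True in \<open>auto simp: isI_def\<close>)
    thus ?thesis using True by (simp add: mv_def)
  qed (use assms in \<open>auto simp: mv_def\<close>)
qed

lemma mv_zero: "mv r X (\<lambda>_. 0) = (\<lambda>_. 0)" by (simp add: mv_def fun_eq_iff)

lemma mv_proj: assumes XG: "X \<in> GL r" and q: "q \<in> proj_pts r" shows "mv r X q \<in> proj_pts r"
proof -
  obtain X' where X'1: "isI r (mm r X' X)" using GL_left_inv[OF XG] by blast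
  have "\<exists>i\<le>r. mv r X q i \<noteq> 0"
  proof (rule ccontr)
    assume "\<not> ?thesis"
    hence z: "mv r X q = (\<lambda>_. 0)" by (auto simp: mv_def fun_eq_iff)
    have "mv r X' (mv r X q) = q" using mv_isI[OF X'1] q by (simp add: mv_mv proj_pts_def)
    hence "q = (\<lambda>_. 0)" using z mv_zero by metis
    thus False using q by (simp add: proj_pts_def)
  qed
  thus ?thesis by (auto simp: proj_pts_def mv_def)
qed

lemma mult_at_subst:
  assumes XG: "X \<in> GL r" and q: "q \<in> proj_pts r" and G: "good r d G"
  shows "mult_at r d (subst r X G) q = mult_at r d G (mv r X q)"
proof -
  obtain A where A: "A \<in> GL r" "\<And>i. i \<le> r \<Longrightarrow> A i 0 = q i" using col_exists[OF q] by blast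
  have "mult_at r d (subst r X G) q = mult_e d (subst r A (subst r X G))"
    by (rule mult_at_eq[OF q A(1) A(2) good_subst[OF G]])
  also have "\<dots> = mult_e d (subst r (mm r X A) G)" by (simp add: subst_comp)
  also have "\<dots> = mult_at r d G (mv r X q)"
  proof (rule mult_at_eq[symmetric, OF mv_proj[OF XG q] GL_mm[OF XG A(1)] _ G])
    fix i assume "i \<le> r"
    thus "mm r X A i 0 = mv r X q i" by (simp add: mm_def mv_def A(2))
  qed
  finally show ?thesis .
qed

lemma mult_e_range: "mult_e d H \<in> {..d} \<union> {Min {}}"
proof (cases "Poly_Mapping.keys H = {}")
  case True thus ?thesis by (simp add: mult_e_def)
next
  case False
  have "mult_e d H \<in> (\<lambda>m. d - Poly_Mapping.lookup m 0) ` Poly_Mapping.keys H"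
    unfolding mult_e_def using False by (intro Min_in) auto
  thus ?thesis by auto
qed

lemma mult_at_finite: "finite ((\<lambda>p. mult_at r d G p) ` proj_pts r)"
proof (rule finite_subset)
  show "(\<lambda>p. mult_at r d G p) ` proj_pts r \<subseteq> {..d} \<union> {Min {}}"
    using mult_e_range by (auto simp: mult_at_def)
qed simp

lemma proj_ne: "proj_pts r \<noteq> {}"
proof -
  have "(\<lambda>i. if i = 0 then 1 else 0 :: 'k::field) \<in> proj_pts r" by (auto simp: proj_pts_def)
  thus ?thesis by blast
qed

lemma mult_max_in: "\<exists>p\<in>proj_pts r. mult_at r d G p = mult_max r d G"
proof -
  have "mult_max r d G \<in> (\<lambda>p. mult_at r d G p) ` proj_pts r"
    unfolding mult_max_def using mult_at_finite proj_ne by (intro Max_in) auto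
  thus ?thesis by auto
qed

lemma mult_max_subst:
  assumes XG: "X \<in> GL r" and G: "good r d G"
  shows "mult_max r d (subst r X G) = mult_max r d G"
proof -
  obtain Y where Y1: "isI r (mm r Y X)" and Y2: "isI r (mm r X Y)" and YG: "Y \<in> GL r"
    using GL_left_inv[OF XG] by blast
  have "(\<lambda>p. mult_at r d (subst r X G) p) ` proj_pts r = (\<lambda>p. mult_at r d G p) ` proj_pts r"
  proof
    show "(\<lambda>p. mult_at r d (subst r X G) p) ` proj_pts r \<subseteq> (\<lambda>p. mult_at r d G p) ` proj_pts r"
      using mult_at_subst[OF XG _ G] mv_proj[OF XG] by auto
  next
    show "(\<lambda>p. mult_at r d G p) ` proj_pts r \<subseteq> (\<lambda>p. mult_at r d (subst r X G) p) ` proj_pts r"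
    proof
      fix a assume "a \<in> (\<lambda>p. mult_at r d G p) ` proj_pts r"
      then obtain p where p: "p \<in> proj_pts r" "a = mult_at r d G p" by auto
      have q: "mv r Y p \<in> proj_pts r" by (rule mv_proj[OF YG p(1)])
      have "mv r X (mv r Y p) = p" using mv_isI[OF Y2] p(1) by (simp add: mv_mv proj_pts_def)
      hence "mult_at r d (subst r X G) (mv r Y p) = a" using mult_at_subst[OF XG q G] p by simp
      thus "a \<in> (\<lambda>p. mult_at r d (subst r X G) p) ` proj_pts r" using q by force
    qed
  qed
  thus ?thesis by (simp add: mult_max_def)
qed



lemma GL_id: "(\<lambda>i j. if i = j then 1 else 0 :: 'k::field) \<in> GL r"
proof -
  have I: "isI r (\<lambda>i j. if i = j then 1 else 0 :: 'k)" by (simp add: isI_def)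
  have "isI r (mm r (\<lambda>i j. if i = j then 1 else 0 :: 'k) (\<lambda>i j. if i = j then 1 else 0))"
    using mm_isI_left[OF I] I by (simp add: isI_def)
  thus ?thesis using GL_iff by blast
qed

lemma finite_K: "finite {m :: nat \<Rightarrow>\<^sub>0 nat. Poly_Mapping.keys m \<subseteq> {..r} \<and> tdeg r m \<le> d}"
  (is "finite ?K")
proof -
  let ?h = "\<lambda>m. restrict (Poly_Mapping.lookup m) {..r}"
  have inj: "inj_on ?h ?K"
  proof (rule inj_onI)
    fix m m' assume m: "m \<in> ?K" and m': "m' \<in> ?K" and e: "?h m = ?h m'"
    show "m = m'"
    proof (rule poly_mapping_eqI)
      fix i show "Poly_Mapping.lookup m i = Poly_Mapping.lookup m' i"
      proof (cases "i \<le> r")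
        case True thus ?thesis using fun_cong[OF e, of i] by simp
      next
        case False
        hence "i \<notin> Poly_Mapping.keys m" "i \<notin> Poly_Mapping.keys m'" using m m' by auto
        thus ?thesis by (simp add: not_in_keys_iff_lookup_eq_zero)
      qed
    qed
  qed
  have sub: "?h ` ?K \<subseteq> PiE {..r} (\<lambda>_. {..d})"
  proof
    fix x assume "x \<in> ?h ` ?K"
    then obtain m where m: "m \<in> ?K" "x = ?h m" by auto
    have "Poly_Mapping.lookup m i \<le> d" if "i \<le> r" for i
    proof -
      have "Poly_Mapping.lookup m i \<le> tdeg r m" unfolding tdeg_def
        by (rule member_le_sum) (use that in auto)
      thus ?thesis using m by simp
    qed
    thus "x \<in> PiE {..r} (\<lambda>_. {..d})" using m by auto
  qed
  have "finite (?h ` ?K)" by (rule finite_subset[OF sub]) (simp add: finite_PiE)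
  thus ?thesis using finite_imageD[OF _ inj] by blast
qed

definition DK :: "nat \<Rightarrow> (nat \<Rightarrow>\<^sub>0 nat) set \<Rightarrow> real" where
  "DK r K = (SUP lam\<in>OPS r. Min ((\<lambda>m. pairing r lam m) ` K) / ops_norm r lam)"

lemma Delta_DK: "Delta r G = DK r (Poly_Mapping.keys G)"
  by (simp add: Delta_def DK_def)

lemma act_subst: "act r h f = subst r (trp h) f"
  by (simp add: act_def trp_def)

lemma trp_trp [simp]: "trp (trp X) = X" by (simp add: trp_def)

theorem lemma4p2:
  fixes f :: "'k::field mpoly" and r d :: nat
  assumes "alg_closed_field TYPE('k)"
    and "1 \<le> r"
    and "is_form r d f"
    and "unstable r f"
  shows "\<exists>g\<in>GL r.
     Delta r (act r g f) = (SUP h\<in>GL r. Delta r (act r h f)) \<and>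
     mult_max r d f = mult_max r d (act r g f) \<and>
     mult_max r d (act r g f) = mult_e d (act r g f)"
proof -
  have r1: "1 \<le> r" by fact
  have gf: "good r d f" by (rule form_good[OF assms(3)])
  have f0: "f \<noteq> 0" using assms(3) by (simp add: is_form_def)
  have gact: "good r d (act r h f)" for h unfolding act_subst by (rule good_subst[OF gf])
  have act0: "act r h f \<noteq> 0" if "h \<in> GL r" for h
    unfolding act_subst by (rule subst_nonzero[OF GL_trp[OF that] gf f0])
  define V where "V = (\<lambda>h. Delta r (act r h f)) ` GL r"
  define KK where "KK = {m :: nat \<Rightarrow>\<^sub>0 nat. Poly_Mapping.keys m \<subseteq> {..r} \<and> tdeg r m \<le> d}"
  have Vsub: "V \<subseteq> DK r ` Pow KK"
  proof
    fix v assume "v \<in> V"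
    then obtain h where "v = Delta r (act r h f)" unfolding V_def by auto
    moreover have "Poly_Mapping.keys (act r h f) \<subseteq> KK" using gact[of h] by (auto simp: good_def KK_def)
    ultimately show "v \<in> DK r ` Pow KK" by (auto simp: Delta_DK)
  qed
  have Vfin: "finite V"
    by (rule finite_subset[OF Vsub]) (simp add: KK_def finite_K)
  have Vne: "V \<noteq> {}" unfolding V_def using GL_id by blast
  have SUPeq: "(SUP h\<in>GL r. Delta r (act r h f)) = Max V"
    unfolding V_def[symmetric] by (rule cSup_eq_Max[OF Vfin Vne])
  have "Max V \<in> V" by (rule Max_in[OF Vfin Vne])
  then obtain g0 where g0: "g0 \<in> GL r" "Delta r (act r g0 f) = Max V" unfolding V_def by auto
  have le_max: "Delta r (act r h f) \<le> Max V" if "h \<in> GL r" for h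
    using Max_ge[OF Vfin] that unfolding V_def by auto
  define F where "F = act r g0 f"
  have gF: "good r d F" unfolding F_def by (rule gact)
  have F0: "F \<noteq> 0" unfolding F_def by (rule act0[OF g0(1)])
  have DF: "Delta r F = Max V" unfolding F_def by (rule g0(2))
  obtain p where p: "p \<in> proj_pts r" "mult_at r d F p = mult_max r d F" using mult_max_in by blast
  define K where "K = {k. k \<le> r \<and> p k \<noteq> 0}"
  have Kfin: "finite K" unfolding K_def by simp
  have Kne: "K \<noteq> {}" using p(1) by (auto simp: proj_pts_def K_def)
  define T where "T k = mm r (Em p k) (Pm k)" for k
  have TG: "T k \<in> GL r" if "k \<in> K" for k
    using that unfolding T_def K_def by (intro GL_mm Em_GL Pm_GL) auto
  define Gk where "Gk k = subst r (T k) F" for k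
  have Gk_eq: "Gk k = subst r (Pm k) (subst r (Em p k) F)" for k
    by (simp add: Gk_def T_def subst_comp)
  have gGk: "good r d (Gk k)" for k unfolding Gk_def by (rule good_subst[OF gF])
  have Gk0: "Gk k \<noteq> 0" if "k \<in> K" for k unfolding Gk_def by (rule subst_nonzero[OF TG[OF that] gF F0])
  have key: "\<exists>k\<in>K. Delta r F \<le> Delta r (Gk k)"
  proof (rule ccontr)
    assume "\<not> ?thesis"
    hence lt: "\<forall>k\<in>K. Delta r (Gk k) < Delta r F" by auto
    define M' where "M' = Max ((\<lambda>k. Delta r (Gk k)) ` K)"
    have "M' \<in> (\<lambda>k. Delta r (Gk k)) ` K" unfolding M'_def using Kfin Kne by (intro Max_in) auto
    hence "M' < Delta r F" using lt by auto
    hence "M' < (SUP lam\<in>OPS r. phi r F lam)" by (simp add: Delta_phi)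
    then obtain lam where lam: "lam \<in> OPS r" "M' < phi r F lam"
      using less_cSUP_iff[OF OPS_ne[OF r1] phi_bdd[OF gF F0]] by blast
    have "Max (lam ` K) \<in> lam ` K" using Kfin Kne by (intro Max_in) auto
    then obtain k where k: "k \<in> K" "lam k = Max (lam ` K)" by auto
    have kmax: "lam j \<le> lam k" if "j \<in> K" for j
      using k(2) Kfin that by (simp add: Max_ge)
    have kr: "k \<le> r" using k(1) by (simp add: K_def)
    define lam' where "lam' = lam \<circ> sw k"
    have lam': "lam' \<in> OPS r" unfolding lam'_def by (rule OPS_sw[OF kr lam(1)])
    define c where "c = Min ((\<lambda>m. pairing r lam m) ` Poly_Mapping.keys F)"
    define H where "H = subst r (Em p k) F"
    have gH: "good r d H" unfolding H_def by (rule good_subst[OF gF])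
    have cH: "c \<le> pairing r lam m" if "m \<in> Poly_Mapping.keys H" for m
    proof (rule subst_pairing[OF gF _ _ that[unfolded H_def]])
      fix j i assume j: "j \<le> r" and i: "i \<le> r" and e: "Em p k j i \<noteq> 0"
      show "lam j \<le> lam i"
      proof (cases "i = k")
        case True
        hence "p j \<noteq> 0" using e by (simp add: Em_def)
        hence "j \<in> K" using j by (simp add: K_def)
        thus ?thesis using kmax True by simp
      next
        case False
        hence "i = j" using e by (simp add: Em_def split: if_splits)
        thus ?thesis by simp
      qed
    next
      fix m assume "m \<in> Poly_Mapping.keys F"
      thus "c \<le> pairing r lam m" unfolding c_def by (rule Min_pairing_le)
    qed
    have cG: "c \<le> pairing r lam' m" if "m \<in> Poly_Mapping.keys (Gk k)" for m
    proof (rule subst_pairing[OF gH _ cH that[unfolded Gk_eq H_def[symmetric]]])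
      fix j i assume j: "j \<le> r" and i: "i \<le> r" and e: "Pm k j i \<noteq> 0"
      hence "i = sw k j" by (simp add: Pm_def split: if_splits)
      thus "lam j \<le> lam' i" by (simp add: lam'_def)
    qed
    have "phi r F lam = c / ops_norm r lam'" by (simp add: phi_def c_def lam'_def norm_sw[OF kr])
    also have "\<dots> \<le> phi r (Gk k) lam'" by (rule phi_ge[OF Gk0[OF k(1)] lam' cG])
    also have "\<dots> \<le> Delta r (Gk k)" by (rule phi_le_Delta[OF gGk Gk0[OF k(1)] lam'])
    also have "\<dots> \<le> M'" unfolding M'_def using Kfin k(1) by (intro Max_ge) auto
    finally show False using lam(2) by simp
  qed
  then obtain k where k: "k \<in> K" "Delta r F \<le> Delta r (Gk k)" by blast
  have kr: "k \<le> r" using k(1) by (simp add: K_def)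
  define g where "g = trp (mm r (trp g0) (T k))"
  have gG: "g \<in> GL r" unfolding g_def by (intro GL_trp GL_mm TG[OF k(1)] g0(1))
  have ag: "act r g f = Gk k"
    by (simp add: act_subst g_def Gk_def F_def subst_comp)
  have D: "Delta r (act r g f) = (SUP h\<in>GL r. Delta r (act r h f))"
    unfolding SUPeq using le_max[OF gG] k(2) DF ag by simp
  have m1: "mult_max r d f = mult_max r d F"
    unfolding F_def act_subst by (rule mult_max_subst[OF GL_trp[OF g0(1)] gf, symmetric])
  have m2: "mult_max r d (Gk k) = mult_max r d F"
    unfolding Gk_def by (rule mult_max_subst[OF TG[OF k(1)] gF])
  have m3: "mult_at r d F p = mult_e d (Gk k)"
    unfolding Gk_def by (rule mult_at_eq[OF p(1) TG[OF k(1)] _ gF]) (simp add: T_def EP_col0[OF kr])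
  have "Delta r (act r g f) = (SUP h\<in>GL r. Delta r (act r h f)) \<and>
     mult_max r d f = mult_max r d (act r g f) \<and>
     mult_max r d (act r g f) = mult_e d (act r g f)"
    using D m1 m2 m3 p(2) unfolding ag by simp
  thus ?thesis using gG by blast
qed


end
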